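(* Let $\ell^{\infty}$ be the space of bounded real sequences $x=(x_i)_{i\in\mathbb{N}}$, and for $p\in(0,\infty)$, $n\in\mathbb{N}$ let $$\|x\|_{\infty,p,n}:=\sup_{j\in\mathbb{N}}\Big(\frac{1}{n}\sum_{i=j}^{j+(n-1)}|x_i|^{p}\Big)^{1/p}.$$ Let $d\in\mathbb{N}$, $\alpha_1,\dots,\alpha_d\in\mathbb{N}$ and $n=\sum_{l=1}^{d}\alpha_l$. Then for all $p\in[1,\infty)$ and all $x\in\ell^{\infty}$, $$\|x\|_{\infty,p,n}^{p}\leq \sum_{l=1}^{d}\frac{\alpha_l}{n}\|x\|_{\infty,p,\alpha_l}^{p}.$$
   Context: $\mathbb{N}=\{1,2,3,\dots\}$. *)

theory Defs
  imports "HOL-Analysis.Analysis"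
begin

text \<open>Sequences are indexed by the positive naturals 1, 2, 3, ...; a sequence is modelled
as a function nat to real whose value at 0 is ignored.\<close>

definition bounded_seq :: "(nat \<Rightarrow> real) \<Rightarrow> bool" where
  "bounded_seq x \<longleftrightarrow> (\<exists>M. \<forall>i\<ge>1. \<bar>x i\<bar> \<le> M)"

definition norm_inf_p_n :: "real \<Rightarrow> nat \<Rightarrow> (nat \<Rightarrow> real) \<Rightarrow> real" where
  "norm_inf_p_n p n x =
     (SUP j\<in>{1..}. ((1 / real n) * (\<Sum>i = j..j + (n - 1). \<bar>x i\<bar> powr p)) powr (1 / p))"

end

theory Submission
  imports Defs
begin

lemma block_split:
  fixes f :: "nat \<Rightarrow> real" and \<alpha> :: "nat \<Rightarrow> nat"
  shows "(\<Sum>i = j..<j + (\<Sum>l = 1..d. \<alpha> l). f i)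
     = (\<Sum>l = 1..d. \<Sum>i = j + (\<Sum>k = 1..<l. \<alpha> k)..<j + (\<Sum>k = 1..<l. \<alpha> k) + \<alpha> l. f i)"
proof (induction d)
  case 0
  then show ?case by simp
next
  case (Suc d)
  have e: "(\<Sum>k = 1..<Suc d. \<alpha> k) = (\<Sum>k = 1..d. \<alpha> k)"
    by (simp add: atLeastLessThanSuc_atLeastAtMost)
  have "(\<Sum>i = j..<j + (\<Sum>l = 1..Suc d. \<alpha> l). f i)
      = (\<Sum>i = j..<j + (\<Sum>l = 1..d. \<alpha> l). f i) + (\<Sum>i = j + (\<Sum>l = 1..d. \<alpha> l)..<j + (\<Sum>l = 1..d. \<alpha> l) + \<alpha> (Suc d). f i)"
    by (simp add: sum.atLeastLessThan_concat add.assoc)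
  also have "\<dots> = (\<Sum>l = 1..Suc d. \<Sum>i = j + (\<Sum>k = 1..<l. \<alpha> k)..<j + (\<Sum>k = 1..<l. \<alpha> k) + \<alpha> l. f i)"
    using Suc e by simp
  finally show ?case .
qed

theorem lemma1p2:
  fixes d :: nat and \<alpha> :: "nat \<Rightarrow> nat" and n :: nat and p :: real and x :: "nat \<Rightarrow> real"
  assumes "d \<ge> 1"
    and "\<forall>l\<in>{1..d}. \<alpha> l \<ge> 1"
    and "n = (\<Sum>l = 1..d. \<alpha> l)"
    and "p \<ge> 1"
    and "bounded_seq x"
  shows "norm_inf_p_n p n x powr p
           \<le> (\<Sum>l = 1..d. (real (\<alpha> l) / real n) * norm_inf_p_n p (\<alpha> l) x powr p)"
proof -
  obtain M where M: "\<forall>i\<ge>1. \<bar>x i\<bar> \<le> M" using assms(5) unfolding bounded_seq_def by blast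
  have M0: "M \<ge> 0" using M[rule_format, of 1] by simp
  define A where "A m j = (1 / real m) * (\<Sum>i = j..j + (m - 1). \<bar>x i\<bar> powr p)" for m j
  have A0: "A m j \<ge> 0" for m j unfolding A_def by (simp add: sum_nonneg)
  have Ab: "A m j \<le> M powr p" if "m \<ge> 1" "j \<ge> 1" for m j
  proof -
    have "(\<Sum>i = j..j + (m - 1). \<bar>x i\<bar> powr p) \<le> (\<Sum>i = j..j + (m - 1). M powr p)"
      apply (rule sum_mono)
      using M that assms(4) by (simp add: powr_mono2)
    also have "\<dots> = real m * M powr p" using that by simp
    finally show ?thesis unfolding A_def using that by (simp add: field_simps)
  qed
  have nrm: "norm_inf_p_n p m x = (SUP j\<in>{1..}. A m j powr (1/p))" for m
    unfolding norm_inf_p_n_def A_def by simp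
  have bdd: "bdd_above ((\<lambda>j. A m j powr (1/p)) ` {1..})" if "m \<ge> 1" for m
    apply (rule bdd_aboveI2[where M="(M powr p) powr (1/p)"])
    using Ab[OF that] A0 assms(4) by (simp add: powr_mono2)
  have upper: "A m j \<le> norm_inf_p_n p m x powr p" if "m \<ge> 1" "j \<ge> 1" for m j
  proof -
    have "A m j powr (1/p) \<le> norm_inf_p_n p m x"
      unfolding nrm using that by (intro cSUP_upper bdd) auto
    hence "(A m j powr (1/p)) powr p \<le> norm_inf_p_n p m x powr p"
      using assms(4) by (intro powr_mono2) auto
    thus ?thesis using A0[of m j] assms(4) by (simp add: powr_powr)
  qed
  have n1: "n \<ge> 1"
  proof -
    have "\<alpha> 1 \<le> n" unfolding assms(3) using assms(1)
      by (intro member_le_sum) auto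
    moreover have "\<alpha> 1 \<ge> 1" using assms(1,2) by auto
    ultimately show ?thesis by linarith
  qed
  define R where "R = (\<Sum>l = 1..d. (real (\<alpha> l) / real n) * norm_inf_p_n p (\<alpha> l) x powr p)"
  have R0: "R \<ge> 0" unfolding R_def by (intro sum_nonneg) auto
  have key: "A n j \<le> R" if "j \<ge> 1" for j
  proof -
    define s where "s l = j + (\<Sum>k = 1..<l. \<alpha> k)" for l
    have "(\<Sum>i = j..j + (n - 1). \<bar>x i\<bar> powr p) = (\<Sum>i = j..<j + n. \<bar>x i\<bar> powr p)"
      using n1 by (intro sum.cong) auto
    also have "\<dots> = (\<Sum>l = 1..d. \<Sum>i = s l..<s l + \<alpha> l. \<bar>x i\<bar> powr p)"
      unfolding assms(3) s_def by (rule block_split)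
    also have "\<dots> = (\<Sum>l = 1..d. real (\<alpha> l) * A (\<alpha> l) (s l))"
    proof (intro sum.cong refl)
      fix l assume l: "l \<in> {1..d}"
      hence a1: "\<alpha> l \<ge> 1" using assms(2) by auto
      have "{s l..<s l + \<alpha> l} = {s l..s l + (\<alpha> l - 1)}" using a1 by auto
      thus "(\<Sum>i = s l..<s l + \<alpha> l. \<bar>x i\<bar> powr p) = real (\<alpha> l) * A (\<alpha> l) (s l)"
        unfolding A_def using a1 by simp
    qed
    also have "\<dots> \<le> (\<Sum>l = 1..d. real (\<alpha> l) * norm_inf_p_n p (\<alpha> l) x powr p)"
    proof (intro sum_mono mult_left_mono)
      fix l assume l: "l \<in> {1..d}"
      hence a1: "\<alpha> l \<ge> 1" using assms(2) by auto
      show "A (\<alpha> l) (s l) \<le> norm_inf_p_n p (\<alpha> l) x powr p"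
        using upper[OF a1] that unfolding s_def by simp
    qed auto
    finally have "(\<Sum>i = j..j + (n - 1). \<bar>x i\<bar> powr p) \<le> (\<Sum>l = 1..d. real (\<alpha> l) * norm_inf_p_n p (\<alpha> l) x powr p)" .
    hence "A n j \<le> (1 / real n) * (\<Sum>l = 1..d. real (\<alpha> l) * norm_inf_p_n p (\<alpha> l) x powr p)"
      unfolding A_def by (intro mult_left_mono) auto
    also have "\<dots> = R" unfolding R_def by (simp add: sum_distrib_left)
    finally show ?thesis .
  qed
  have N0: "norm_inf_p_n p n x \<ge> 0"
  proof -
    have "A n 1 powr (1/p) \<le> norm_inf_p_n p n x"
      unfolding nrm using n1 by (intro cSUP_upper bdd) auto
    thus ?thesis by (smt (verit) powr_ge_zero)
  qed
  have "norm_inf_p_n p n x \<le> R powr (1/p)"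
    unfolding nrm
  proof (rule cSUP_least)
    show "{1::nat..} \<noteq> {}" by auto
    fix j :: nat assume "j \<in> {1..}"
    thus "A n j powr (1/p) \<le> R powr (1/p)"
      using key[of j] A0 assms(4) by (intro powr_mono2) auto
  qed
  hence "norm_inf_p_n p n x powr p \<le> (R powr (1/p)) powr p"
    using N0 assms(4) by (intro powr_mono2) auto
  also have "\<dots> = R" using R0 assms(4) by (simp add: powr_powr)
  finally show ?thesis unfolding R_def .
qed

end
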